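(* Let $n\geqslant1$. Every rainbow on $\{0,\dots,n\}$ of maximal size (among all rainbows on $\{0,\dots,n\}$) has exactly $\lfloor\frac{n+1}{2}\rfloor$ arcs.
   Context: An arc is a pair $\underline{x}\to\underline{y}$ of integers $0\leqslant x<y\leqslant n$, with weight $\binom{n}{x,\,y-x,\,n-y}=\frac{n!}{x!(y-x)!(n-y)!}$ (this is the number of subgroup inclusions $H\leqslant K$ in $C_{p_1\cdots p_n}$, $p_i$ distinct primes, with $|H|$ a product of $x$ of the primes and $|K|$ a product of $y$ of them). A rainbow on $\{0,\dots,n\}$ is a set of arcs $\{\underline{x_i}\to\underline{y_i}\}_{0\leqslant i\leqslant m}$ with $x_0<x_1<\dots<x_m<y_m<\dots<y_0$; its size is the sum of the weights of its arcs. *)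

theory Defs
  imports Main
begin

definition arc_weight :: "nat \<Rightarrow> nat \<times> nat \<Rightarrow> nat" where
  "arc_weight n a = fact n div (fact (fst a) * fact (snd a - fst a) * fact (n - snd a))"

text \<open>A rainbow on {0..n}: a nonempty finite set of arcs x_0 -> y_0, ..., x_m -> y_m with
  x_0 < ... < x_m < y_m < ... < y_0, i.e. any two distinct arcs are strictly nested.\<close>

definition is_arc :: "nat \<Rightarrow> nat \<times> nat \<Rightarrow> bool" where
  "is_arc n a \<longleftrightarrow> fst a < snd a \<and> snd a \<le> n"

definition rainbow :: "nat \<Rightarrow> (nat \<times> nat) set \<Rightarrow> bool" where
  "rainbow n R \<longleftrightarrow> finite R \<and> R \<noteq> {} \<and> (\<forall>a\<in>R. is_arc n a) \<and>
     (\<forall>a\<in>R. \<forall>b\<in>R. a \<noteq> b \<longrightarrow>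
        (fst a < fst b \<and> snd b < snd a) \<or> (fst b < fst a \<and> snd a < snd b))"

definition rainbow_size :: "nat \<Rightarrow> (nat \<times> nat) set \<Rightarrow> nat" where
  "rainbow_size n R = (\<Sum>a\<in>R. arc_weight n a)"

end

theory Submission
  imports Defs Complex_Main
begin

definition W :: "nat \<Rightarrow> nat \<Rightarrow> nat \<Rightarrow> nat" where
  "W n a b = (n choose (a+b)) * ((a+b) choose a)"

lemma W_sym: "W n a b = W n b a"
  unfolding W_def by (metis add.commute binomial_symmetric le_add1 add_diff_cancel_left')

lemma W_zero: "n < a + b \<Longrightarrow> W n a b = 0"
  unfolding W_def by simp

lemma W_00: "W n 0 0 = 1" unfolding W_def by simp

lemma W_SS: "W (Suc n) (Suc a) (Suc b) = W n (Suc a) (Suc b) + W n a (Suc b) + W n (Suc a) b"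
proof -
  have e1: "Suc a + Suc b = Suc (Suc (a+b))" by simp
  show ?thesis unfolding W_def e1
    by (simp add: algebra_simps)
qed

lemma W_0S: "W (Suc n) 0 (Suc b) = W n 0 (Suc b) + W n 0 b"
  unfolding W_def by simp

lemma W_S0: "W (Suc n) (Suc a) 0 = W n (Suc a) 0 + W n a 0"
  unfolding W_def by simp

definition tri :: "nat \<Rightarrow> nat \<Rightarrow> nat" where
  "tri n i = (\<Sum>a\<le>n. W n a (a+i))"

lemma tri_ext: "n \<le> N \<Longrightarrow> (\<Sum>a\<le>N. W n a (a+i)) = tri n i"
proof (induction N rule: dec_induct)
  case base then show ?case by (simp add: tri_def)
next
  case (step N) then show ?case by (simp add: W_zero)
qed

lemma tri_Suc_Suc: "tri (Suc n) (Suc i) = tri n i + tri n (Suc i) + tri n (Suc (Suc i))"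
proof -
  have "tri (Suc n) (Suc i) = W (Suc n) 0 (Suc i) + (\<Sum>a\<le>n. W (Suc n) (Suc a) (Suc a + Suc i))"
    unfolding tri_def by (subst sum.atMost_Suc_shift) simp
  also have "\<dots> = (W n 0 (Suc i) + (\<Sum>a\<le>n. W n (Suc a) (Suc a + Suc i)))
      + (W n 0 i + (\<Sum>a\<le>n. W n (Suc a) (Suc a + i)))
      + (\<Sum>a\<le>n. W n a (a + Suc (Suc i)))"
    by (simp add: W_0S W_SS sum.distrib algebra_simps)
  also have "W n 0 (Suc i) + (\<Sum>a\<le>n. W n (Suc a) (Suc a + Suc i)) = tri n (Suc i)"
  proof -
    have "(\<Sum>a\<le>Suc n. W n a (a + Suc i)) = W n 0 (Suc i) + (\<Sum>a\<le>n. W n (Suc a) (Suc a + Suc i))"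
      by (subst sum.atMost_Suc_shift) simp
    then show ?thesis using tri_ext[of n "Suc n" "Suc i"] by simp
  qed
  also have "W n 0 i + (\<Sum>a\<le>n. W n (Suc a) (Suc a + i)) = tri n i"
  proof -
    have "(\<Sum>a\<le>Suc n. W n a (a + i)) = W n 0 i + (\<Sum>a\<le>n. W n (Suc a) (Suc a + i))"
      by (subst sum.atMost_Suc_shift) simp
    then show ?thesis using tri_ext[of n "Suc n" "i"] by simp
  qed
  also have "(\<Sum>a\<le>n. W n a (a + Suc (Suc i))) = tri n (Suc (Suc i))"
    by (simp add: tri_def)
  finally show ?thesis by simp
qed

lemma tri_Suc_0: "tri (Suc n) 0 = tri n 0 + 2 * tri n 1"
proof -
  have "tri (Suc n) 0 = W (Suc n) 0 0 + (\<Sum>a\<le>n. W (Suc n) (Suc a) (Suc a))"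
    unfolding tri_def by (subst sum.atMost_Suc_shift) simp
  also have "\<dots> = (W n 0 0 + (\<Sum>a\<le>n. W n (Suc a) (Suc a)))
      + (\<Sum>a\<le>n. W n a (a + 1)) + (\<Sum>a\<le>n. W n (Suc a) a)"
    by (simp add: W_00 W_SS sum.distrib algebra_simps)
  also have "W n 0 0 + (\<Sum>a\<le>n. W n (Suc a) (Suc a)) = tri n 0"
  proof -
    have "(\<Sum>a\<le>Suc n. W n a (a + 0)) = W n 0 0 + (\<Sum>a\<le>n. W n (Suc a) (Suc a))"
      by (subst sum.atMost_Suc_shift) simp
    then show ?thesis using tri_ext[of n "Suc n" 0] by simp
  qed
  also have "(\<Sum>a\<le>n. W n (Suc a) a) = tri n 1"
    unfolding tri_def by (rule sum.cong) (auto simp: W_sym)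
  also have "(\<Sum>a\<le>n. W n a (a + 1)) = tri n 1"
    unfolding tri_def by simp
  finally show ?thesis by simp
qed

lemma tri_0: "tri 0 i = (if i = 0 then 1 else 0)"
  by (simp add: tri_def W_def)

lemma tri_antimono_step: "tri n (Suc i) \<le> tri n i"
proof (induction n arbitrary: i)
  case 0 then show ?case by (simp add: tri_0)
next
  case (Suc n)
  have am: "\<And>i j. i \<le> j \<Longrightarrow> tri n j \<le> tri n i"
    using Suc.IH by (rule lift_Suc_antimono_le)
  show ?case
  proof (cases i)
    case 0 then show ?thesis
      using Suc.IH[of 1] by (simp add: tri_Suc_0 tri_Suc_Suc numeral_2_eq_2)
  next
    case (Suc i')
    then show ?thesis
      using am[of i' "Suc (Suc (Suc i'))"] by (simp add: tri_Suc_Suc)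
  qed
qed

definition gg :: "nat \<Rightarrow> nat \<Rightarrow> nat" where
  "gg n d = (n choose d) * (d choose (d div 2))"

lemma W_gg_even: "W n j j = gg n (2*j)"
  unfolding W_def gg_def by (simp add: mult_2)

lemma W_gg_odd: "W n j (Suc j) = gg n (Suc (2*j))"
  unfolding W_def gg_def by (simp add: mult_2)

lemma tri0_gg: "tri n 0 = (\<Sum>j\<le>n. gg n (2*j))"
  unfolding tri_def by (simp add: W_gg_even)

lemma tri1_gg: "tri n 1 = (\<Sum>j\<le>n. gg n (Suc (2*j)))"
  unfolding tri_def by (simp add: W_gg_odd)

lemma gg_pos: "d \<le> n \<Longrightarrow> 0 < gg n d"
  unfolding gg_def by simp

lemma gg_zero: "n < d \<Longrightarrow> gg n d = 0"
  unfolding gg_def by simp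

lemma odd_sum_less:
  assumes "n = Suc (2*k)"
  shows "(\<Sum>j<k. gg n (Suc (2*j))) < (\<Sum>j\<le>k. gg n (2*j))"
proof -
  have "(\<Sum>j\<le>k. gg n (Suc (2*j))) \<le> (\<Sum>j\<le>n. gg n (Suc (2*j)))"
    by (rule sum_mono2) (use assms in auto)
  also have "\<dots> \<le> (\<Sum>j\<le>n. gg n (2*j))"
  proof -
    have "tri n 1 \<le> tri n 0" using tri_antimono_step[of n 0] by simp
    then show ?thesis by (simp only: tri0_gg tri1_gg)
  qed
  also have "\<dots> = (\<Sum>j\<le>k. gg n (2*j))"
    by (rule sum.mono_neutral_right) (use assms in \<open>auto simp: gg_zero\<close>)
  finally have A: "(\<Sum>j\<le>k. gg n (Suc (2*j))) \<le> (\<Sum>j\<le>k. gg n (2*j))" .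
  have "(\<Sum>j\<le>k. gg n (Suc (2*j))) = (\<Sum>j<k. gg n (Suc (2*j))) + gg n (Suc (2*k))"
    by (simp add: lessThan_Suc_atMost[symmetric])
  moreover have "0 < gg n (Suc (2*k))" using assms gg_pos by simp
  ultimately show ?thesis using A by linarith
qed

lemma choose_Suc_mult: "(n choose Suc m) * Suc m = (n choose m) * (n - m)"
proof -
  have "Suc m * (n choose Suc m) = n * ((n - 1) choose m)"
    using times_binomial_minus1_eq[of "Suc m" n] by simp
  also have "\<dots> = (n - m) * (n choose m)" by (simp add: binomial_absorb_comp)
  finally show ?thesis by (simp add: mult.commute)
qed

lemma gg_ratio: "gg n (Suc d) * (d div 2 + 1) = gg n d * (n - d)"
proof (cases "even d")
  case True
  then obtain j where d: "d = 2*j" by blast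
  have c1: "(Suc (2*j) choose j) * Suc j = (2*j choose j) * Suc (2*j)"
  proof -
    have "Suc (2*j) * (2*j choose j) = (Suc (2*j) choose Suc j) * Suc j"
      by (rule Suc_times_binomial_eq)
    moreover have "(Suc (2*j) choose Suc j) = (Suc (2*j) choose j)"
      using binomial_symmetric[of "Suc j" "Suc (2*j)"] by simp
    ultimately show ?thesis by (simp add: mult.commute)
  qed
  have "gg n (Suc d) * (d div 2 + 1) = (n choose Suc (2*j)) * ((Suc (2*j) choose j) * Suc j)"
    unfolding gg_def d by (simp add: algebra_simps)
  also have "\<dots> = ((n choose Suc (2*j)) * Suc (2*j)) * (2*j choose j)"
    by (subst c1) (simp only: ac_simps)
  also have "\<dots> = (n choose (2*j)) * (n - 2*j) * (2*j choose j)"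
    by (simp only: choose_Suc_mult)
  also have "\<dots> = gg n d * (n - d)"
    unfolding gg_def d by simp
  finally show ?thesis .
next
  case False
  then obtain j where d: "d = Suc (2*j)" by (metis oddE Suc_eq_plus1)
  have c2: "(Suc (Suc (2*j)) choose Suc j) = 2 * (Suc (2*j) choose j)"
  proof -
    have "(Suc (2*j) choose Suc j) = (Suc (2*j) choose j)"
      using binomial_symmetric[of "Suc j" "Suc (2*j)"] by simp
    then show ?thesis by simp
  qed
  have dd: "Suc d div 2 = Suc j" "d div 2 = j" using d by simp_all
  have "gg n (Suc d) * (d div 2 + 1) = (n choose Suc (Suc (2*j))) * (Suc (Suc (2*j)) choose Suc j) * Suc j"
    unfolding gg_def dd by (simp del: binomial_Suc_Suc add: d)
  also have "\<dots> = (n choose Suc (Suc (2*j))) * (2 * (Suc (2*j) choose j)) * Suc j"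
    by (simp only: c2)
  also have "\<dots> = ((n choose Suc (Suc (2*j))) * Suc (Suc (2*j))) * (Suc (2*j) choose j)"
    by (simp add: algebra_simps)
  also have "\<dots> = (n choose Suc (2*j)) * (n - Suc (2*j)) * (Suc (2*j) choose j)"
    by (simp only: choose_Suc_mult)
  also have "\<dots> = gg n d * (n - d)"
    unfolding gg_def dd by (simp add: d)
  finally show ?thesis .
qed

lemma gg_down_step:
  assumes "gg n (Suc d) \<le> gg n d"
  shows "gg n (Suc (Suc d)) \<le> gg n (Suc d)"
proof (cases "d < n")
  case False
  then show ?thesis by (simp add: gg_zero)
next
  case True
  have pos: "0 < gg n d" using True gg_pos by simp
  have "gg n d * (n - d) = gg n (Suc d) * (d div 2 + 1)" by (rule gg_ratio[symmetric])
  also have "\<dots> \<le> gg n d * (d div 2 + 1)" using assms by (rule mult_le_mono1)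
  finally have X: "gg n d * (n - d) \<le> gg n d * (d div 2 + 1)" .
  have pq: "n - d \<le> d div 2 + 1" using X pos by (rule mult_left_le_imp_le)
  have pq2: "n - Suc d \<le> Suc d div 2 + 1" using pq by linarith
  have "gg n (Suc (Suc d)) * (Suc d div 2 + 1) = gg n (Suc d) * (n - Suc d)" by (rule gg_ratio)
  also have "\<dots> \<le> gg n (Suc d) * (Suc d div 2 + 1)" using pq2 by (rule mult_le_mono2)
  finally have "gg n (Suc (Suc d)) * (Suc d div 2 + 1) \<le> gg n (Suc d) * (Suc d div 2 + 1)" .
  then show ?thesis by (rule mult_right_le_imp_le) simp
qed

definition mode :: "nat \<Rightarrow> nat" where
  "mode n = (LEAST d. gg n (Suc d) \<le> gg n d)"

lemma mode_ex: "gg n (Suc (mode n)) \<le> gg n (mode n)"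
  unfolding mode_def by (rule LeastI[of _ n]) (simp add: gg_zero)

lemma mode_less: "1 \<le> n \<Longrightarrow> mode n < n"
proof -
  assume n: "1 \<le> n"
  have "gg n n * ((n - 1) div 2 + 1) = gg n (n - 1) * (n - (n - 1))"
    using gg_ratio[of n "n - 1"] n by simp
  then have "gg n n \<le> gg n (n - 1)" using n
    by (metis diff_diff_cancel le_add2 mult.right_neutral mult_le_mono2 order_trans)
  then have "gg n (Suc (n - 1)) \<le> gg n (n - 1)" using n by simp
  then have "mode n \<le> n - 1" unfolding mode_def by (rule Least_le)
  then show ?thesis using n by simp
qed

lemma gg_up: "d1 \<le> d2 \<Longrightarrow> d2 \<le> mode n \<Longrightarrow> gg n d1 \<le> gg n d2"
proof (induction d2 rule: dec_induct)
  case base then show ?case by simp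
next
  case (step m)
  have "m < mode n" using step by simp
  then have "\<not> gg n (Suc m) \<le> gg n m" unfolding mode_def by (rule not_less_Least)
  then show ?case using step by simp
qed

lemma gg_down: "mode n \<le> d1 \<Longrightarrow> d1 \<le> d2 \<Longrightarrow> gg n d2 \<le> gg n d1"
proof -
  have dn: "gg n (Suc m) \<le> gg n m" if "mode n \<le> m" for m
    using that
  proof (induction m rule: dec_induct)
    case base then show ?case by (rule mode_ex)
  next
    case (step m) then show ?case using gg_down_step by blast
  qed
  assume a: "mode n \<le> d1" "d1 \<le> d2"
  from a(2) show ?thesis
  proof (induction d2 rule: dec_induct)
    case base then show ?case by simp
  next
    case (step m)
    then show ?case using dn[of m] a(1) by simp
  qed
qed

lemma gg_between:
  "(d \<le> f \<and> f \<le> mode n) \<or> (mode n \<le> f \<and> f \<le> d) \<Longrightarrow> gg n d \<le> gg n f"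
  using gg_up gg_down by blast

lemma arc_weight_eq:
  assumes "x \<le> y" "y \<le> n"
  shows "arc_weight n (x, y) = (n choose (x + (n - y))) * ((x + (n - y)) choose x)"
proof -
  define s where "s = x + (n - y)"
  have s1: "s \<le> n" "x \<le> s" "s - x = n - y" "n - s = y - x" using assms by (auto simp: s_def)
  have "fact n = fact s * fact (n - s) * (n choose s)" using binomial_fact_lemma[OF s1(1)] by simp
  also have "fact s = fact x * fact (s - x) * (s choose x)" using binomial_fact_lemma[OF s1(2)] by simp
  finally have "fact n = (fact x * fact (y - x) * fact (n - y)) * ((n choose s) * (s choose x))"
    using s1 by (simp add: algebra_simps)
  then show ?thesis unfolding arc_weight_def s_def[symmetric] by simp
qed

lemma arc_weight_le:
  assumes "x \<le> y" "y \<le> n"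
  shows "arc_weight n (x, y) \<le> gg n (x + (n - y))"
  unfolding arc_weight_eq[OF assms] gg_def
  by (rule mult_le_mono2) (metis binomial_maximum)

definition spaced :: "nat set \<Rightarrow> bool" where
  "spaced D \<longleftrightarrow> (\<forall>a\<in>D. \<forall>b\<in>D. a < b \<longrightarrow> a + 2 \<le> b)"

lemma card_spaced:
  assumes sp: "spaced S" and sub: "S \<subseteq> {a..b}"
  shows "2 * card S \<le> b + 2 - a"
proof -
  have inj: "inj_on (\<lambda>x. (x - a) div 2) S"
  proof (rule inj_onI, rule ccontr)
    fix x y assume xy: "x \<in> S" "y \<in> S" "(x - a) div 2 = (y - a) div 2" "x \<noteq> y"
    have gen: "(u - a) div 2 < (v - a) div 2" if "u \<in> S" "v \<in> S" "u < v" for u v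
    proof -
      have "u + 2 \<le> v" using sp that unfolding spaced_def by blast
      moreover have "a \<le> u" using sub that by auto
      ultimately have "(u - a) + 2 \<le> v - a" by linarith
      then have "((u - a) + 2) div 2 \<le> (v - a) div 2" by (rule div_le_mono)
      then show ?thesis by simp
    qed
    show False
    proof (cases "x < y")
      case True then show ?thesis using gen[of x y] xy by simp
    next
      case False then have "y < x" using xy by simp
      then show ?thesis using gen[of y x] xy by simp
    qed
  qed
  have img: "(\<lambda>x. (x - a) div 2) ` S \<subseteq> {..(b - a) div 2}"
  proof
    fix z assume "z \<in> (\<lambda>x. (x - a) div 2) ` S"
    then obtain x where x: "x \<in> S" "z = (x - a) div 2" by blast
    then have "x \<le> b" using sub by auto
    then have "x - a \<le> b - a" by simp
    then show "z \<in> {..(b - a) div 2}" using x by (simp add: div_le_mono)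
  qed
  have "card S = card ((\<lambda>x. (x - a) div 2) ` S)" using inj by (simp add: card_image)
  also have "\<dots> \<le> card {..(b - a) div 2}" by (rule card_mono) (use img in auto)
  finally have cs: "card S \<le> (b - a) div 2 + 1" by simp
  show ?thesis
  proof (cases "S = {}")
    case True then show ?thesis by simp
  next
    case False
    then have "a \<le> b" using sub by auto
    moreover have "2 * ((b - a) div 2) \<le> b - a" using div_mult_mod_eq[of "b-a" 2] by linarith
    ultimately show ?thesis using cs by linarith
  qed
qed

definition rk :: "nat set \<Rightarrow> nat \<Rightarrow> nat" where
  "rk D d = card {x\<in>D. x < d}"

lemma rk_bij:
  assumes fin: "finite D"
  shows "bij_betw (rk D) D {..<card D}"
proof -
  have mono: "rk D u < rk D v" if "u \<in> D" "v \<in> D" "u < v" for u v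
  proof -
    have "{x\<in>D. x < u} \<subset> {x\<in>D. x < v}" using that by auto
    then show ?thesis unfolding rk_def by (rule psubset_card_mono[rotated]) (use fin in auto)
  qed
  have inj: "inj_on (rk D) D"
  proof (rule inj_onI, rule ccontr)
    fix x y assume "x \<in> D" "y \<in> D" "rk D x = rk D y" "x \<noteq> y"
    then show False using mono[of x y] mono[of y x] by (cases "x < y") auto
  qed
  have sub: "rk D ` D \<subseteq> {..<card D}"
  proof
    fix z assume "z \<in> rk D ` D"
    then obtain d where d: "d \<in> D" "z = rk D d" by blast
    have "{x\<in>D. x < d} \<subset> D" using d by auto
    then have "card {x\<in>D. x < d} < card D" using fin by (rule psubset_card_mono[rotated])
    then show "z \<in> {..<card D}" using d by (simp add: rk_def)
  qed
  have "card (rk D ` D) = card {..<card D}" using inj by (simp add: card_image)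
  then have "rk D ` D = {..<card D}" using sub by (intro card_subset_eq) auto
  then show ?thesis using inj by (simp add: bij_betw_def)
qed

lemma prog_spaced: "spaced ((\<lambda>j. s + 2*j) ` A)"
  unfolding spaced_def by auto

lemma prog_inj: "inj_on (\<lambda>j. s + 2*(j::nat)) A"
  by (rule inj_onI) simp

lemma prog_sum: "(\<Sum>d\<in>(\<lambda>j. s + 2*j) ` A. gg n d) = (\<Sum>j\<in>A. gg n (s + 2*j))"
  by (subst sum.reindex[OF prog_inj]) simp

lemma comb:
  assumes fin: "finite D" and sp: "spaced D" and sub: "D \<subseteq> {..<n}"
    and ck: "card D < (n + 1) div 2"
  shows "\<exists>F. finite F \<and> spaced F \<and> F \<subseteq> {..<n} \<and> (\<Sum>d\<in>D. gg n d) < (\<Sum>d\<in>F. gg n d)"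
proof -
  define k where "k = card D"
  have n1: "1 \<le> n" using ck by (cases n) auto
  have nk: "2 * k + 1 \<le> n" using ck unfolding k_def by linarith
  define M where "M = mode n"
  have Mn: "M < n" using mode_less[OF n1] by (simp add: M_def)
  define L where "L = {x\<in>D. x \<le> M}"
  define p where "p = card L"
  have finL: "finite L" using fin by (simp add: L_def)
  have spsub: "spaced S" if "S \<subseteq> D" for S
    using sp that unfolding spaced_def by blast
  have spL: "spaced L" by (rule spsub) (auto simp: L_def)
  have "L \<subseteq> {0..M}" by (auto simp: L_def)
  from card_spaced[OF spL this] have p1: "2 * p \<le> M + 2" by (simp add: p_def)
  have p2: "2 * p \<le> M + 1" if "M \<notin> D"
  proof (cases M)
    case 0
    then have "L = {}" using that by (auto simp: L_def)
    then show ?thesis by (simp add: p_def)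
  next
    case (Suc M')
    have "L \<subseteq> {0..M'}"
    proof
      fix x assume "x \<in> L"
      then have "x \<in> D" "x \<le> M" by (auto simp: L_def)
      then have "x \<noteq> M" "x \<le> M" using that by auto
      then show "x \<in> {0..M'}" using Suc by auto
    qed
    then show ?thesis using card_spaced[OF spL, of 0 M'] Suc by (auto simp: p_def)
  qed
  define t where "t = (if M \<in> D then M + 2 - 2 * p else M + 1 - 2 * p)"
  have key: "(d \<le> t + 2 * rk D d \<and> t + 2 * rk D d \<le> M) \<or> (M \<le> t + 2 * rk D d \<and> t + 2 * rk D d \<le> d)"
    if dD: "d \<in> D" for d
  proof -
    define i where "i = rk D d"
    have finb: "finite {x\<in>D. x < d}" using fin by simp
    show ?thesis
    proof (cases "d \<le> M")
      case True
      define S where "S = {x\<in>D. d \<le> x \<and> x \<le> M}"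
      have spS: "spaced S" by (rule spsub) (auto simp: S_def)
      have "S = L - {x\<in>D. x < d}" by (auto simp: S_def L_def)
      moreover have "{x\<in>D. x < d} \<subseteq> L" using True by (auto simp: L_def)
      ultimately have cS: "card S = p - i"
        using finL by (simp add: card_Diff_subset p_def i_def rk_def)
      have "d \<in> S" using dD True by (simp add: S_def)
      moreover have "finite S" using fin by (simp add: S_def)
      ultimately have "card S \<ge> 1" by (metis One_nat_def Suc_leI card_gt_0_iff empty_iff)
      then have ip: "i < p" using cS by simp
      show ?thesis
      proof (cases "M \<in> D")
        case True
        have "S \<subseteq> {d..M}" by (auto simp: S_def)
        from card_spaced[OF spS this] have "2 * card S \<le> M + 2 - d" .
        then have a: "2 * (p - i) \<le> M + 2 - d" using cS by simp
        have tt: "t = M + 2 - 2 * p" using True by (simp add: t_def)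
        have "d \<le> t + 2 * i" "t + 2 * i \<le> M" using a tt ip p1 \<open>d \<le> M\<close> by linarith+
        then show ?thesis by (simp add: i_def)
      next
        case False
        have dM: "d < M" using False dD \<open>d \<le> M\<close> le_less by auto
        have "S \<subseteq> {d..M - 1}"
        proof
          fix x assume "x \<in> S"
          then have "x \<in> D" "d \<le> x" "x \<le> M" by (auto simp: S_def)
          then have "x \<noteq> M" using False by auto
          then show "x \<in> {d..M - 1}" using \<open>d \<le> x\<close> \<open>x \<le> M\<close> by simp
        qed
        from card_spaced[OF spS this] have "2 * card S \<le> M - 1 + 2 - d" .
        then have a: "2 * (p - i) \<le> M - 1 + 2 - d" using cS by simp
        have tt: "t = M + 1 - 2 * p" using False by (simp add: t_def)
        have "d \<le> t + 2 * i" "t + 2 * i \<le> M" using a tt ip p2[OF False] dM by linarith+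
        then show ?thesis by (simp add: i_def)
      qed
    next
      case False
      define S where "S = {x\<in>D. M < x \<and> x \<le> d}"
      have spS: "spaced S" by (rule spsub) (auto simp: S_def)
      have e1: "{x\<in>D. x \<le> d} = insert d {x\<in>D. x < d}" using dD by auto
      have c1: "card {x\<in>D. x \<le> d} = i + 1"
        unfolding e1 using finb by (simp add: i_def rk_def)
      have "S = {x\<in>D. x \<le> d} - L" using False by (auto simp: S_def L_def)
      moreover have "L \<subseteq> {x\<in>D. x \<le> d}" using False by (auto simp: L_def)
      ultimately have cS: "card S = i + 1 - p"
        using finL c1 by (simp add: card_Diff_subset p_def)
      have "L \<subseteq> {x\<in>D. x < d}" using False by (auto simp: L_def)
      then have pi: "p \<le> i" unfolding p_def i_def rk_def using finb by (rule card_mono[rotated])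
      show ?thesis
      proof (cases "M \<in> D")
        case True
        have "S \<subseteq> {M+2..d}" using True sp unfolding S_def spaced_def by auto
        from card_spaced[OF spS this] have "2 * card S \<le> d + 2 - (M + 2)" .
        moreover have "M + 2 \<le> d" using True sp dD False unfolding spaced_def by auto
        ultimately have a: "2 * (i + 1 - p) \<le> d + 2 - (M + 2)" "M + 2 \<le> d" using cS by simp_all
        have tt: "t = M + 2 - 2 * p" using True by (simp add: t_def)
        have "M \<le> t + 2 * i" "t + 2 * i \<le> d" using a tt pi p1 by linarith+
        then show ?thesis by (simp add: i_def)
      next
        case Mn: False
        have "S \<subseteq> {M+1..d}" unfolding S_def by auto
        from card_spaced[OF spS this] have "2 * card S \<le> d + 2 - (M + 1)" .
        then have a: "2 * (i + 1 - p) \<le> d + 2 - (M + 1)" using cS by simp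
        have tt: "t = M + 1 - 2 * p" using Mn by (simp add: t_def)
        have "M \<le> t + 2 * i" "t + 2 * i \<le> d" using a tt pi p2[OF Mn] False by linarith+
        then show ?thesis by (simp add: i_def)
      qed
    qed
  qed
  have bij: "bij_betw (rk D) D {..<k}" using rk_bij[OF fin] by (simp add: k_def)
  have range: "t + 2 * i < n" if "i < k" for i
  proof -
    have "i \<in> rk D ` D" using bij that by (simp add: bij_betw_def)
    then obtain d where d: "d \<in> D" "rk D d = i" by blast
    have "d < n" using d sub by auto
    from key[OF d(1)] have "t + 2 * rk D d \<le> M \<or> t + 2 * rk D d \<le> d" by blast
    then show ?thesis using d(2) Mn \<open>d < n\<close> by linarith
  qed
  have tM: "t \<le> M + 2"
  proof (cases "M \<in> D")
    case True then show ?thesis by (simp add: t_def)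
  next
    case False then have "t = M + 1 - 2 * p" by (simp add: t_def)
    then show ?thesis by linarith
  qed
  have "(\<Sum>d\<in>D. gg n d) \<le> (\<Sum>d\<in>D. gg n (t + 2 * rk D d))"
  proof (rule sum_mono)
    fix d assume "d \<in> D"
    show "gg n d \<le> gg n (t + 2 * rk D d)"
      using gg_between[of d "t + 2 * rk D d" n] key[OF \<open>d \<in> D\<close>] unfolding M_def by blast
  qed
  also have "\<dots> = (\<Sum>i<k. gg n (t + 2 * i))"
    using sum.reindex_bij_betw[OF bij, of "\<lambda>i. gg n (t + 2 * i)"] by simp
  finally have S1: "(\<Sum>d\<in>D. gg n d) \<le> (\<Sum>i<k. gg n (t + 2 * i))" .
  show ?thesis
  proof (cases "2 \<le> t")
    case True
    define F where "F = (\<lambda>j. (t - 2) + 2*j) ` {..k}"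
    have "(\<Sum>d\<in>F. gg n d) = (\<Sum>j\<le>k. gg n ((t - 2) + 2*j))"
      unfolding F_def by (rule prog_sum)
    also have "\<dots> = gg n (t - 2) + (\<Sum>j<k. gg n ((t - 2) + 2 * Suc j))"
      using sum.atMost_shift[of "\<lambda>j. gg n (t - 2 + 2*j)" k] by simp
    also have "(\<Sum>j<k. gg n ((t - 2) + 2 * Suc j)) = (\<Sum>j<k. gg n (t + 2 * j))"
    proof (rule sum.cong)
      fix j assume "j \<in> {..<k}"
      have "t - 2 + 2 * Suc j = t + 2 * j" using True by simp
      then show "gg n ((t - 2) + 2 * Suc j) = gg n (t + 2 * j)" by (simp only:)
    qed simp
    finally have "(\<Sum>d\<in>F. gg n d) = gg n (t - 2) + (\<Sum>j<k. gg n (t + 2 * j))" .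
    moreover have "0 < gg n (t - 2)" using tM Mn by (intro gg_pos) linarith
    moreover have "F \<subseteq> {..<n}"
    proof
      fix x assume "x \<in> F"
      then obtain j where j: "j \<le> k" "x = t - 2 + 2 * j" by (auto simp: F_def)
      show "x \<in> {..<n}"
      proof (cases j)
        case 0 then show ?thesis using j tM Mn by simp
      next
        case (Suc j') then show ?thesis using j range[of j'] True by simp
      qed
    qed
    ultimately show ?thesis using S1 prog_spaced[of "t - 2" "{..k}"] unfolding F_def
      by (intro exI[of _ F]) (auto simp: F_def)
  next
    case t2: False
    show ?thesis
    proof (cases "t + 2 * k < n")
      case True
      define F where "F = (\<lambda>j. t + 2*j) ` {..k}"
      have "(\<Sum>d\<in>F. gg n d) = (\<Sum>j\<le>k. gg n (t + 2*j))"
        unfolding F_def by (rule prog_sum)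
      also have "\<dots> = (\<Sum>j<k. gg n (t + 2*j)) + gg n (t + 2 * k)"
        by (simp add: lessThan_Suc_atMost[symmetric] del: lessThan_Suc_atMost)
      finally have "(\<Sum>d\<in>F. gg n d) = (\<Sum>j<k. gg n (t + 2*j)) + gg n (t + 2 * k)" .
      moreover have "0 < gg n (t + 2 * k)" using True by (intro gg_pos) linarith
      moreover have "F \<subseteq> {..<n}" using True by (auto simp: F_def)
      ultimately show ?thesis using S1 prog_spaced[of t "{..k}"] unfolding F_def
        by (intro exI[of _ F]) (auto simp: F_def)
    next
      case False
      have t1: "t = 1" and nn: "n = Suc (2 * k)" using False t2 nk by linarith+
      define F where "F = (\<lambda>j. 0 + 2*j) ` {..k}"
      have "(\<Sum>d\<in>F. gg n d) = (\<Sum>j\<le>k. gg n (0 + 2*j))"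
        unfolding F_def by (rule prog_sum)
      moreover have "(\<Sum>i<k. gg n (t + 2 * i)) < (\<Sum>j\<le>k. gg n (2*j))"
        using odd_sum_less[OF nn] t1 by simp
      moreover have "F \<subseteq> {..<n}" using nn by (auto simp: F_def)
      ultimately show ?thesis using S1 prog_spaced[of 0 "{..k}"] unfolding F_def
        by (intro exI[of _ F]) (auto simp: F_def)
    qed
  qed
qed

definition dv :: "nat \<Rightarrow> nat \<times> nat \<Rightarrow> nat" where
  "dv n a = fst a + (n - snd a)"

lemma rainbow_dv_sep:
  assumes rb: "rainbow n R" and a: "a \<in> R" and b: "b \<in> R" and ab: "a \<noteq> b"
  shows "dv n a + 2 \<le> dv n b \<or> dv n b + 2 \<le> dv n a"
proof -
  have arcs: "fst a < snd a" "snd a \<le> n" "fst b < snd b" "snd b \<le> n"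
    using rb a b unfolding rainbow_def is_arc_def by auto
  have "(fst a < fst b \<and> snd b < snd a) \<or> (fst b < fst a \<and> snd a < snd b)"
    using rb a b ab unfolding rainbow_def by blast
  then show ?thesis using arcs unfolding dv_def by linarith
qed

lemma rainbow_D:
  assumes rb: "rainbow n R"
  shows "finite (dv n ` R)" "spaced (dv n ` R)" "dv n ` R \<subseteq> {..<n}" "inj_on (dv n) R"
proof -
  show "finite (dv n ` R)" using rb unfolding rainbow_def by simp
  show inj: "inj_on (dv n) R"
  proof (rule inj_onI, rule ccontr)
    fix a b assume "a \<in> R" "b \<in> R" "dv n a = dv n b" "a \<noteq> b"
    then show False using rainbow_dv_sep[OF rb] by fastforce
  qed
  show "spaced (dv n ` R)"
    unfolding spaced_def
  proof (intro ballI impI)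
    fix u v assume u: "u \<in> dv n ` R" and v: "v \<in> dv n ` R" and uv: "u < v"
    from u obtain a where a: "a \<in> R" "u = dv n a" by blast
    from v obtain b where b: "b \<in> R" "v = dv n b" by blast
    have "a \<noteq> b" using a b uv by auto
    then show "u + 2 \<le> v" using rainbow_dv_sep[OF rb a(1) b(1)] a b uv by linarith
  qed
  show "dv n ` R \<subseteq> {..<n}"
  proof
    fix u assume "u \<in> dv n ` R"
    then obtain a where a: "a \<in> R" "u = dv n a" by blast
    have "fst a < snd a" "snd a \<le> n" using rb a unfolding rainbow_def is_arc_def by auto
    then show "u \<in> {..<n}" using a unfolding dv_def by simp
  qed
qed

lemma rainbow_size_le:
  assumes rb: "rainbow n R"
  shows "rainbow_size n R \<le> (\<Sum>d\<in>dv n ` R. gg n d)"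
proof -
  have "rainbow_size n R \<le> (\<Sum>a\<in>R. gg n (dv n a))"
    unfolding rainbow_size_def
  proof (rule sum_mono)
    fix a assume a: "a \<in> R"
    obtain x y where xy: "a = (x, y)" by (cases a)
    have "x < y" "y \<le> n" using rb a xy unfolding rainbow_def is_arc_def by auto
    then show "arc_weight n a \<le> gg n (dv n a)"
      using arc_weight_le[of x y n] xy by (simp add: dv_def)
  qed
  also have "\<dots> = (\<Sum>d\<in>dv n ` R. gg n d)"
    using sum.reindex[OF rainbow_D(4)[OF rb], of "gg n"] by (simp add: comp_def)
  finally show ?thesis .
qed

definition arcF :: "nat \<Rightarrow> nat \<Rightarrow> nat \<times> nat" where
  "arcF n d = (d div 2, n - (d - d div 2))"

lemma arcF_rainbow:
  assumes fin: "finite F" and sp: "spaced F" and sub: "F \<subseteq> {..<n}" and ne: "F \<noteq> {}"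
  shows "rainbow n (arcF n ` F)" "rainbow_size n (arcF n ` F) = (\<Sum>d\<in>F. gg n d)"
proof -
  have dv2: "2 * (d div 2) \<le> d" "d \<le> 2 * (d div 2) + 1" for d :: nat by linarith+
  have nest: "fst (arcF n d1) < fst (arcF n d2) \<and> snd (arcF n d2) < snd (arcF n d1)"
    if "d1 \<in> F" "d2 \<in> F" "d1 < d2" for d1 d2
  proof -
    have "d1 + 2 \<le> d2" using sp that unfolding spaced_def by blast
    moreover have "d2 < n" using sub that by auto
    ultimately show ?thesis unfolding arcF_def using dv2[of d1] dv2[of d2] by simp linarith
  qed
  have inj: "inj_on (arcF n) F"
  proof (rule inj_onI, rule ccontr)
    fix d1 d2 assume "d1 \<in> F" "d2 \<in> F" "arcF n d1 = arcF n d2" "d1 \<noteq> d2"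
    then show False using nest[of d1 d2] nest[of d2 d1] by (cases "d1 < d2") auto
  qed
  show "rainbow n (arcF n ` F)"
    unfolding rainbow_def
  proof (intro conjI ballI impI)
    show "finite (arcF n ` F)" using fin by simp
    show "arcF n ` F \<noteq> {}" using ne by simp
  next
    fix a assume "a \<in> arcF n ` F"
    then obtain d where d: "d \<in> F" "a = arcF n d" by blast
    have "d < n" using d sub by auto
    then show "is_arc n a" using d dv2[of d] unfolding is_arc_def arcF_def by simp linarith
  next
    fix a b assume a: "a \<in> arcF n ` F" and b: "b \<in> arcF n ` F" and ab: "a \<noteq> b"
    from a obtain d1 where d1: "d1 \<in> F" "a = arcF n d1" by blast
    from b obtain d2 where d2: "d2 \<in> F" "b = arcF n d2" by blast
    have "d1 \<noteq> d2" using ab d1 d2 by auto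
    then show "fst a < fst b \<and> snd b < snd a \<or> fst b < fst a \<and> snd a < snd b"
      using nest[OF d1(1) d2(1)] nest[OF d2(1) d1(1)] d1 d2 by (cases "d1 < d2") auto
  qed
  have w: "arc_weight n (arcF n d) = gg n d" if "d \<in> F" for d
  proof -
    have "d < n" using that sub by auto
    then have c: "d div 2 \<le> n - (d - d div 2)" "n - (d - d div 2) \<le> n"
      "d div 2 + (n - (n - (d - d div 2))) = d" using dv2[of d] by linarith+
    show ?thesis unfolding arcF_def arc_weight_eq[OF c(1) c(2)] c(3) gg_def by simp
  qed
  show "rainbow_size n (arcF n ` F) = (\<Sum>d\<in>F. gg n d)"
    unfolding rainbow_size_def using w by (simp add: sum.reindex[OF inj])
qed

theorem corollary5p12:
  fixes n :: nat and R :: "(nat \<times> nat) set"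
  assumes "n \<ge> 1"
    and "rainbow n R"
    and "\<forall>R'. rainbow n R' \<longrightarrow> rainbow_size n R' \<le> rainbow_size n R"
  shows "card R = (n + 1) div 2"
proof -
  note rb = assms(2)
  define D where "D = dv n ` R"
  have finD: "finite D" and spD: "spaced D" and subD: "D \<subseteq> {..<n}"
    using rainbow_D[OF rb] by (simp_all add: D_def)
  have cD: "card D = card R" unfolding D_def by (rule card_image[OF rainbow_D(4)[OF rb]])
  have "D \<subseteq> {0..n - 1}" using subD assms(1) by auto
  from card_spaced[OF spD this] have "2 * card D \<le> n + 1" using assms(1) by simp
  then have le: "card R \<le> (n + 1) div 2" using cD by linarith
  show ?thesis
  proof (rule ccontr)
    assume "card R \<noteq> (n + 1) div 2"
    then have "card D < (n + 1) div 2" using le cD by simp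
    from comb[OF finD spD subD this] obtain F where
      F: "finite F" "spaced F" "F \<subseteq> {..<n}" "(\<Sum>d\<in>D. gg n d) < (\<Sum>d\<in>F. gg n d)" by blast
    have "F \<noteq> {}" using F(4) by auto
    note RF = arcF_rainbow[OF F(1-3) this]
    have "rainbow_size n (arcF n ` F) \<le> rainbow_size n R" using assms(3) RF(1) by blast
    also have "\<dots> \<le> (\<Sum>d\<in>D. gg n d)" unfolding D_def by (rule rainbow_size_le[OF rb])
    also have "\<dots> < (\<Sum>d\<in>F. gg n d)" by (rule F(4))
    also have "\<dots> = rainbow_size n (arcF n ` F)" by (rule RF(2)[symmetric])
    finally show False by simp
  qed
qed

end
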